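(* For real parameters $a>0$, $b\ge 0$, $\alpha>0$, $n>0$, let $s^*=s^*(a,b,\alpha,n)$ denote the unique solution in $(0,n)$ of $$\alpha a n s^{-\alpha-1}-(\alpha+1)a s^{-\alpha}-b=0,$$ which is the unique minimizer of $s\mapsto \frac{a s^{-\alpha}+b}{n-s}$ over $s\in(0,n)$. Then: (i) $s^*$ is nondecreasing in $a$, and strictly increasing in $a$ whenever $b>0$; (ii) $s^*$ is strictly decreasing in $b$; (iii) $s^*$ is strictly increasing in $n$; (iv) if $b=0$, then $s^*/n=\alpha/(\alpha+1)$, independent of $a$ and $n$; (v) the fraction $s^*/n$ is nondecreasing in $a$ (strictly increasing if $b>0$), strictly decreasing in $b$, and nonincreasing in $n$; if $b>0$, then $\lim_{n\to\infty} s^*/n=0$; moreover, if $\alpha<1$, $$0\;\ge\;\frac{\partial}{\partial n}\Big(\frac{s^*}{n}\Big)\;\ge\;-\frac{\alpha}{\alpha+1}\,\frac{b}{a}\,n^{\alpha-1}.$$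
   Context: Monotonicity statements refer to $s^*$ (or $s^*/n$) viewed as a function of one parameter with the others held fixed, within the stated parameter ranges. *)

theory Defs
  imports "HOL-Analysis.Analysis"
begin

definition foc :: "real \<Rightarrow> real \<Rightarrow> real \<Rightarrow> real \<Rightarrow> real \<Rightarrow> real" where
  "foc a b \<alpha> n s = \<alpha> * a * n * s powr (-\<alpha> - 1) - (\<alpha> + 1) * a * s powr (-\<alpha>) - b"

definition obj :: "real \<Rightarrow> real \<Rightarrow> real \<Rightarrow> real \<Rightarrow> real \<Rightarrow> real" where
  "obj a b \<alpha> n s = (a * s powr (-\<alpha>) + b) / (n - s)"

definition sstar :: "real \<Rightarrow> real \<Rightarrow> real \<Rightarrow> real \<Rightarrow> real" where
  "sstar a b \<alpha> n = (THE s. 0 < s \<and> s < n \<and> foc a b \<alpha> n s = 0)"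

end

theory Submission
  imports Defs
begin


definition Q :: "real \<Rightarrow> real \<Rightarrow> real \<Rightarrow> real \<Rightarrow> real \<Rightarrow> real" where
  "Q c0 c1 c2 p x = c0 - c1 * x - c2 * x powr p"

lemma Q_dec:
  assumes "c1 > 0" "c2 \<ge> 0" "p > 0" "0 \<le> x" "x < y"
  shows "Q c0 c1 c2 p y < Q c0 c1 c2 p x"
proof -
  have "x powr p \<le> y powr p" using assms by (intro powr_mono2) auto
  hence "c2 * x powr p \<le> c2 * y powr p" using assms by (simp add: mult_left_mono)
  moreover have "c1 * x < c1 * y" using assms by simp
  ultimately show ?thesis unfolding Q_def by linarith
qed

lemma Q_cmp_strict:
  assumes "c1 > 0" "c2 \<ge> 0" "p > 0" "0 < x1" "0 < x2"
    "Q c0 c1 c2 p x2 = 0" "Q c0 c1 c2 p x1 > 0"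
  shows "x1 < x2"
proof (rule ccontr)
  assume "\<not> x1 < x2"
  hence "x2 \<le> x1" by simp
  hence "Q c0 c1 c2 p x1 \<le> Q c0 c1 c2 p x2"
    using Q_dec[OF assms(1-3), of x2 x1 c0] assms by (cases "x2 = x1") auto
  thus False using assms by simp
qed

lemma Q_cmp:
  assumes "c1 > 0" "c2 \<ge> 0" "p > 0" "0 < x1" "0 < x2"
    "Q c0 c1 c2 p x2 = 0" "Q c0 c1 c2 p x1 \<ge> 0"
  shows "x1 \<le> x2"
proof (rule ccontr)
  assume "\<not> x1 \<le> x2"
  hence "x2 < x1" by simp
  hence "Q c0 c1 c2 p x1 < Q c0 c1 c2 p x2"
    using Q_dec[OF assms(1-3), of x2 x1 c0] assms by auto
  thus False using assms by simp
qed

lemma Q_uniq: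
  assumes "c1 > 0" "c2 \<ge> 0" "p > 0" "0 < x1" "0 < x2"
    "Q c0 c1 c2 p x2 = 0" "Q c0 c1 c2 p x1 = 0"
  shows "x1 = x2"
  using Q_cmp[OF assms(1-5)] Q_cmp[OF assms(1-3) assms(5) assms(4)] assms by force

lemma Q_exists:
  assumes "c1 > 0" "c2 \<ge> 0" "p > 0" "c0 > 0" "L > 0" "Q c0 c1 c2 p L < 0"
  shows "\<exists>x. 0 < x \<and> x < L \<and> Q c0 c1 c2 p x = 0"
proof -
  have cont: "continuous_on {0..L} (\<lambda>x. Q c0 c1 c2 p x)"
    unfolding Q_def using assms
    by (intro continuous_intros continuous_on_powr') auto
  have "Q c0 c1 c2 p 0 = c0" using assms by (simp add: Q_def)
  then obtain x where x: "0 \<le> x" "x \<le> L" "Q c0 c1 c2 p x = 0"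
    using IVT2'[where f="\<lambda>x. Q c0 c1 c2 p x" and a=0 and b=L and y=0, OF _ _ _ cont] assms by auto
  have "x \<noteq> 0" using x \<open>Q c0 c1 c2 p 0 = c0\<close> assms by auto
  moreover have "x \<noteq> L" using x assms by auto
  ultimately have "0 < x \<and> x < L \<and> Q c0 c1 c2 p x = 0" using x by auto
  thus ?thesis by blast
qed

lemma foc_Q:
  assumes "s > 0"
  shows "foc a b \<alpha> n s = s powr (-\<alpha>-1) * Q (\<alpha>*a*n) ((\<alpha>+1)*a) b (\<alpha>+1) s"
proof -
  have "s powr (-\<alpha>-1) * s powr 1 = s powr ((-\<alpha>-1)+1)"
    using assms by (simp only: powr_add)
  hence e1: "s powr (-\<alpha>-1) * s = s powr (-\<alpha>)"
    using assms by simp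
  have e2: "s powr (-\<alpha>-1) * s powr (\<alpha>+1) = 1"
    using assms by (simp add: powr_add[symmetric])
  have "s powr (-\<alpha>-1) * Q (\<alpha>*a*n) ((\<alpha>+1)*a) b (\<alpha>+1) s
     = \<alpha>*a*n * s powr (-\<alpha>-1) - (\<alpha>+1)*a*(s powr (-\<alpha>-1) * s) - b * (s powr (-\<alpha>-1) * s powr (\<alpha>+1))"
    unfolding Q_def by (simp add: algebra_simps)
  also have "\<dots> = foc a b \<alpha> n s" unfolding e1 e2 foc_def by simp
  finally show ?thesis by simp
qed

lemma foc_zero_iff:
  assumes "s > 0"
  shows "foc a b \<alpha> n s = 0 \<longleftrightarrow> Q (\<alpha>*a*n) ((\<alpha>+1)*a) b (\<alpha>+1) s = 0"
  using foc_Q[OF assms] assms by simp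

lemma Q_scale:
  assumes "n > 0" "t > 0"
  shows "Q (\<alpha>*a*n) ((\<alpha>+1)*a) b (\<alpha>+1) (n*t) = n * Q (a*\<alpha>) (a*(\<alpha>+1)) (b * n powr \<alpha>) (\<alpha>+1) t"
proof -
  have "(n*t) powr (\<alpha>+1) = n * n powr \<alpha> * t powr (\<alpha>+1)"
    using assms by (simp add: powr_mult powr_add)
  thus ?thesis unfolding Q_def by (simp add: algebra_simps)
qed

lemma sstar_props:
  assumes "\<alpha> > 0" "a > 0" "b \<ge> 0" "n > 0"
  shows "(\<exists>!s. 0 < s \<and> s < n \<and> foc a b \<alpha> n s = 0)"
    "0 < sstar a b \<alpha> n" "sstar a b \<alpha> n < n" "foc a b \<alpha> n (sstar a b \<alpha> n) = 0"
    "Q (\<alpha>*a*n) ((\<alpha>+1)*a) b (\<alpha>+1) (sstar a b \<alpha> n) = 0"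
proof -
  have c1: "(\<alpha>+1)*a > 0" using assms by simp
  have p: "\<alpha>+1 > 0" using assms by simp
  have "Q (\<alpha>*a*n) ((\<alpha>+1)*a) b (\<alpha>+1) n = - a*n - b * n powr (\<alpha>+1)"
    unfolding Q_def by (simp add: algebra_simps)
  also have "\<dots> < 0"
  proof -
    have "b * n powr (\<alpha>+1) \<ge> 0" using assms by simp
    moreover have "a * n > 0" using assms by simp
    ultimately show ?thesis by linarith
  qed
  finally have "Q (\<alpha>*a*n) ((\<alpha>+1)*a) b (\<alpha>+1) n < 0" .
  then obtain x where x: "0 < x" "x < n" "Q (\<alpha>*a*n) ((\<alpha>+1)*a) b (\<alpha>+1) x = 0"
    using Q_exists[OF c1 assms(3) p _ assms(4), of "\<alpha>*a*n"] assms by auto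
  show ex: "\<exists>!s. 0 < s \<and> s < n \<and> foc a b \<alpha> n s = 0"
  proof (rule ex1I[of _ x])
    show "0 < x \<and> x < n \<and> foc a b \<alpha> n x = 0" using x foc_zero_iff[OF x(1), of a b \<alpha> n] by simp
    fix y assume y: "0 < y \<and> y < n \<and> foc a b \<alpha> n y = 0"
    hence "Q (\<alpha>*a*n) ((\<alpha>+1)*a) b (\<alpha>+1) y = 0" using foc_zero_iff[of y a b \<alpha> n] by simp
    thus "y = x" using Q_uniq[OF c1 assms(3) p, of y x] x y by simp
  qed
  have "0 < sstar a b \<alpha> n \<and> sstar a b \<alpha> n < n \<and> foc a b \<alpha> n (sstar a b \<alpha> n) = 0"
    unfolding sstar_def by (rule theI'[OF ex])
  thus "0 < sstar a b \<alpha> n" "sstar a b \<alpha> n < n" "foc a b \<alpha> n (sstar a b \<alpha> n) = 0"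
    by auto
  thus "Q (\<alpha>*a*n) ((\<alpha>+1)*a) b (\<alpha>+1) (sstar a b \<alpha> n) = 0"
    using foc_zero_iff[of "sstar a b \<alpha> n" a b \<alpha> n] by simp
qed

lemma tstar_props:
  assumes "\<alpha> > 0" "a > 0" "b \<ge> 0" "n > 0"
  shows "0 < sstar a b \<alpha> n / n" "sstar a b \<alpha> n / n < 1"
    "Q (a*\<alpha>) (a*(\<alpha>+1)) (b * n powr \<alpha>) (\<alpha>+1) (sstar a b \<alpha> n / n) = 0"
proof -
  note S = sstar_props[OF assms]
  show "0 < sstar a b \<alpha> n / n" "sstar a b \<alpha> n / n < 1" using S assms by auto
  have "n * (sstar a b \<alpha> n / n) = sstar a b \<alpha> n" using assms by simp
  hence "n * Q (a*\<alpha>) (a*(\<alpha>+1)) (b * n powr \<alpha>) (\<alpha>+1) (sstar a b \<alpha> n / n) = 0"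
    using Q_scale[OF assms(4) \<open>0 < sstar a b \<alpha> n / n\<close>, of \<alpha> a b] S by simp
  thus "Q (a*\<alpha>) (a*(\<alpha>+1)) (b * n powr \<alpha>) (\<alpha>+1) (sstar a b \<alpha> n / n) = 0"
    using assms by simp
qed

lemma tstar_unique:
  assumes "\<alpha> > 0" "a > 0" "b \<ge> 0" "n > 0" "t > 0"
    "Q (a*\<alpha>) (a*(\<alpha>+1)) (b * n powr \<alpha>) (\<alpha>+1) t = 0"
  shows "sstar a b \<alpha> n / n = t"
  using Q_uniq[of "a*(\<alpha>+1)" "b * n powr \<alpha>" "\<alpha>+1" "sstar a b \<alpha> n / n" t] tstar_props[OF assms(1-4)] assms
  by auto

lemma mono_a:
  assumes "\<alpha> > 0" "0 < a1" "a1 \<le> a2" "b \<ge> 0" "n > 0"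
  shows "sstar a1 b \<alpha> n \<le> sstar a2 b \<alpha> n"
    "b > 0 \<Longrightarrow> a1 < a2 \<Longrightarrow> sstar a1 b \<alpha> n < sstar a2 b \<alpha> n"
proof -
  have a2: "a2 > 0" using assms by simp
  note S1 = sstar_props[OF assms(1,2,4,5)] and S2 = sstar_props[OF assms(1) a2 assms(4,5)]
  define s where "s = sstar a1 b \<alpha> n"
  have s0: "s > 0" using S1 s_def by simp
  have e1: "a1 * (\<alpha>*n - (\<alpha>+1)* s) = b * s powr (\<alpha>+1)"
    using S1(5) unfolding s_def Q_def by (simp add: algebra_simps)
  have "b * s powr (\<alpha>+1) \<ge> 0" using assms by simp
  hence "a1 * (\<alpha>*n - (\<alpha>+1)* s) \<ge> 0" using e1 by simp
  hence nn: "\<alpha>*n - (\<alpha>+1)* s \<ge> 0" using assms by (simp add: zero_le_mult_iff)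
  have e2: "Q (\<alpha>*a2*n) ((\<alpha>+1)*a2) b (\<alpha>+1) s = (a2 - a1) * (\<alpha>*n - (\<alpha>+1)* s)"
    using e1 unfolding Q_def by (simp add: algebra_simps)
  have "Q (\<alpha>*a2*n) ((\<alpha>+1)*a2) b (\<alpha>+1) s \<ge> 0" unfolding e2 using nn assms by simp
  thus "sstar a1 b \<alpha> n \<le> sstar a2 b \<alpha> n"
    using Q_cmp[of "(\<alpha>+1)*a2" b "\<alpha>+1" s "sstar a2 b \<alpha> n"] S2 s0 assms unfolding s_def by auto
  assume b: "b > 0" and lt: "a1 < a2"
  have "b * s powr (\<alpha>+1) > 0" using b s0 by simp
  hence "a1 * (\<alpha>*n - (\<alpha>+1)* s) > 0" using e1 by simp
  hence "\<alpha>*n - (\<alpha>+1)* s > 0" using assms by (simp add: zero_less_mult_iff)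
  hence "Q (\<alpha>*a2*n) ((\<alpha>+1)*a2) b (\<alpha>+1) s > 0" unfolding e2 using lt by simp
  thus "sstar a1 b \<alpha> n < sstar a2 b \<alpha> n"
    using Q_cmp_strict[of "(\<alpha>+1)*a2" b "\<alpha>+1" s "sstar a2 b \<alpha> n"] S2 s0 assms unfolding s_def by auto
qed

lemma mono_b:
  assumes "\<alpha> > 0" "0 < a" "0 \<le> b1" "b1 < b2" "n > 0"
  shows "sstar a b2 \<alpha> n < sstar a b1 \<alpha> n"
proof -
  have b2: "b2 \<ge> 0" using assms by simp
  note S1 = sstar_props[OF assms(1,2,3,5)] and S2 = sstar_props[OF assms(1,2) b2 assms(5)]
  define s where "s = sstar a b2 \<alpha> n"
  have s0: "s > 0" using S2 s_def by simp
  have "Q (\<alpha>*a*n) ((\<alpha>+1)*a) b1 (\<alpha>+1) s = Q (\<alpha>*a*n) ((\<alpha>+1)*a) b2 (\<alpha>+1) s + (b2 - b1) * s powr (\<alpha>+1)"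
    unfolding Q_def by (simp add: algebra_simps)
  also have "\<dots> > 0" using S2 s_def s0 assms by simp
  finally show ?thesis
    using Q_cmp_strict[of "(\<alpha>+1)*a" b1 "\<alpha>+1" s "sstar a b1 \<alpha> n"] S1 s0 assms unfolding s_def by auto
qed

lemma mono_n:
  assumes "\<alpha> > 0" "0 < a" "0 \<le> b" "0 < n1" "n1 < n2"
  shows "sstar a b \<alpha> n1 < sstar a b \<alpha> n2"
proof -
  have n2: "n2 > 0" using assms by simp
  note S1 = sstar_props[OF assms(1,2,3,4)] and S2 = sstar_props[OF assms(1,2,3) n2]
  define s where "s = sstar a b \<alpha> n1"
  have s0: "s > 0" using S1 s_def by simp
  have "Q (\<alpha>*a*n2) ((\<alpha>+1)*a) b (\<alpha>+1) s = Q (\<alpha>*a*n1) ((\<alpha>+1)*a) b (\<alpha>+1) s + \<alpha>*a*(n2 - n1)"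
    unfolding Q_def by (simp add: algebra_simps)
  also have "\<dots> > 0" using S1 s_def s0 assms by simp
  finally show ?thesis
    using Q_cmp_strict[of "(\<alpha>+1)*a" b "\<alpha>+1" s "sstar a b \<alpha> n2"] S2 s0 assms unfolding s_def by auto
qed

lemma mono_tn:
  assumes "\<alpha> > 0" "0 < a" "0 \<le> b" "0 < n1" "n1 \<le> n2"
  shows "sstar a b \<alpha> n2 / n2 \<le> sstar a b \<alpha> n1 / n1"
proof -
  have n2: "n2 > 0" using assms by simp
  note T1 = tstar_props[OF assms(1,2,3,4)] and T2 = tstar_props[OF assms(1,2,3) n2]
  define t where "t = sstar a b \<alpha> n2 / n2"
  have t0: "t > 0" using T2 t_def by simp
  have "n1 powr \<alpha> \<le> n2 powr \<alpha>" using assms by (intro powr_mono2) auto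
  hence "b * n1 powr \<alpha> * t powr (\<alpha>+1) \<le> b * n2 powr \<alpha> * t powr (\<alpha>+1)"
    using assms by (intro mult_right_mono mult_left_mono) auto
  hence "Q (a*\<alpha>) (a*(\<alpha>+1)) (b * n1 powr \<alpha>) (\<alpha>+1) t \<ge> Q (a*\<alpha>) (a*(\<alpha>+1)) (b * n2 powr \<alpha>) (\<alpha>+1) t"
    unfolding Q_def by simp
  hence "Q (a*\<alpha>) (a*(\<alpha>+1)) (b * n1 powr \<alpha>) (\<alpha>+1) t \<ge> 0" using T2 t_def by simp
  thus ?thesis
    using Q_cmp[of "a*(\<alpha>+1)" "b * n1 powr \<alpha>" "\<alpha>+1" t "sstar a b \<alpha> n1 / n1"] T1 t0 assms unfolding t_def by auto
qed

lemma b0_val: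
  assumes "\<alpha> > 0" "0 < a" "n > 0"
  shows "sstar a 0 \<alpha> n / n = \<alpha> / (\<alpha>+1)"
proof (rule tstar_unique[OF assms(1,2) order_refl assms(3)])
  show "0 < \<alpha> / (\<alpha>+1)" using assms by simp
  show "Q (a*\<alpha>) (a*(\<alpha>+1)) (0 * n powr \<alpha>) (\<alpha>+1) (\<alpha> / (\<alpha>+1)) = 0"
    unfolding Q_def using assms by (simp add: field_simps)
qed



lemma obj_deriv:
  assumes "0 < x" "x < n"
  shows "(obj a b \<alpha> n has_real_derivative (- foc a b \<alpha> n x / (n - x)^2)) (at x)"
proof -
  have d: "((\<lambda>x. (a * x powr (-\<alpha>) + b) / (n - x)) has_real_derivative
     ((a * ((-\<alpha>) * x powr (-\<alpha> - 1))) * (n - x) - (a * x powr (-\<alpha>) + b) * (-1)) / ((n - x) * (n - x))) (at x)"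
  proof -
    have d1: "((\<lambda>x. x powr (-\<alpha>)) has_real_derivative (-\<alpha>) * x powr (-\<alpha>-1)) (at x)"
      using has_real_derivative_powr[of x "-\<alpha>"] assms by simp
    have d2: "((\<lambda>x. a * x powr (-\<alpha>) + b) has_real_derivative a * ((-\<alpha>) * x powr (-\<alpha>-1)) + 0) (at x)"
      by (rule DERIV_add[OF DERIV_cmult[OF d1] DERIV_const])
    have d3: "((\<lambda>x. n - x) has_real_derivative 0 - 1) (at x)"
      by (rule DERIV_diff[OF DERIV_const DERIV_ident])
    show ?thesis using DERIV_divide[OF d2 d3] assms by simp
  qed
  have "x powr (-\<alpha>-1) * x powr 1 = x powr ((-\<alpha>-1)+1)"
    using assms by (simp only: powr_add)
  hence e1: "x powr (-\<alpha>-1) * x = x powr (-\<alpha>)" using assms by simp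
  have "(a * ((-\<alpha>) * x powr (-\<alpha> - 1))) * (n - x) - (a * x powr (-\<alpha>) + b) * (-1)
      = - foc a b \<alpha> n x"
    unfolding foc_def e1[symmetric] by (simp add: algebra_simps)
  hence "((a * ((-\<alpha>) * x powr (-\<alpha> - 1))) * (n - x) - (a * x powr (-\<alpha>) + b) * (-1)) / ((n - x) * (n - x))
     = - foc a b \<alpha> n x / (n - x)^2" by (simp add: power2_eq_square)
  with d show ?thesis unfolding obj_def[abs_def] by simp
qed

lemma foc_sign:
  assumes "\<alpha> > 0" "a > 0" "b \<ge> 0" "n > 0" "0 < x"
  shows "x < sstar a b \<alpha> n \<Longrightarrow> foc a b \<alpha> n x > 0"
    "sstar a b \<alpha> n < x \<Longrightarrow> foc a b \<alpha> n x < 0"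
proof -
  note S = sstar_props[OF assms(1-4)]
  have c1: "(\<alpha>+1)*a > 0" and p: "\<alpha>+1 > 0" using assms by auto
  have px: "x powr (-\<alpha>-1) > 0" using assms by simp
  show "x < sstar a b \<alpha> n \<Longrightarrow> foc a b \<alpha> n x > 0"
  proof -
    assume "x < sstar a b \<alpha> n"
    hence "Q (\<alpha>*a*n) ((\<alpha>+1)*a) b (\<alpha>+1) x > 0"
      using Q_dec[OF c1 assms(3) p, of x "sstar a b \<alpha> n" "\<alpha>*a*n"] S assms by simp
    thus ?thesis using foc_Q[OF assms(5), of a b \<alpha> n] px by simp
  qed
  show "sstar a b \<alpha> n < x \<Longrightarrow> foc a b \<alpha> n x < 0"
  proof -
    assume "sstar a b \<alpha> n < x"
    hence "Q (\<alpha>*a*n) ((\<alpha>+1)*a) b (\<alpha>+1) x < 0"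
      using Q_dec[OF c1 assms(3) p, of "sstar a b \<alpha> n" x "\<alpha>*a*n"] S assms by simp
    thus ?thesis using foc_Q[OF assms(5), of a b \<alpha> n] px by (simp add: mult_pos_neg)
  qed
qed

lemma obj_min:
  assumes "\<alpha> > 0" "a > 0" "b \<ge> 0" "n > 0" "0 < s" "s < n" "s \<noteq> sstar a b \<alpha> n"
  shows "obj a b \<alpha> n (sstar a b \<alpha> n) < obj a b \<alpha> n s"
proof -
  note S = sstar_props[OF assms(1-4)]
  define S0 where "S0 = sstar a b \<alpha> n"
  have S0: "0 < S0" "S0 < n" using S S0_def by auto
  show ?thesis
  proof (cases "s < S0")
    case True
    have "\<exists>z. s < z \<and> z < S0 \<and> obj a b \<alpha> n S0 - obj a b \<alpha> n s = (S0 - s) * (- foc a b \<alpha> n z / (n - z)^2)"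
      by (rule MVT2[OF True]) (use obj_deriv assms S0 in auto)
    then obtain z where z: "s < z" "z < S0"
      "obj a b \<alpha> n S0 - obj a b \<alpha> n s = (S0 - s) * (- foc a b \<alpha> n z / (n - z)^2)" by blast
    have "foc a b \<alpha> n z > 0" using foc_sign(1)[OF assms(1-4), of z] z assms S0_def by auto
    moreover have "(n - z)^2 > 0" using z S0 by simp
    ultimately have "- foc a b \<alpha> n z / (n - z)^2 < 0" by simp
    moreover have "S0 - s > 0" using True by simp
    ultimately have "(S0 - s) * (- foc a b \<alpha> n z / (n - z)^2) < 0" by (simp only: mult_pos_neg)
    thus ?thesis using z S0_def by simp
  next
    case False
    hence lt: "S0 < s" using assms S0_def by simp
    have "\<exists>z. S0 < z \<and> z < s \<and> obj a b \<alpha> n s - obj a b \<alpha> n S0 = (s - S0) * (- foc a b \<alpha> n z / (n - z)^2)"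
      by (rule MVT2[OF lt]) (use obj_deriv assms S0 in auto)
    then obtain z where z: "S0 < z" "z < s"
      "obj a b \<alpha> n s - obj a b \<alpha> n S0 = (s - S0) * (- foc a b \<alpha> n z / (n - z)^2)" by blast
    have "foc a b \<alpha> n z < 0" using foc_sign(2)[OF assms(1-4), of z] z S0 S0_def by auto
    moreover have "(n - z)^2 > 0" using z assms by simp
    ultimately have "- foc a b \<alpha> n z / (n - z)^2 > 0" by (simp add: divide_neg_pos)
    moreover have "s - S0 > 0" using lt by simp
    ultimately have "(s - S0) * (- foc a b \<alpha> n z / (n - z)^2) > 0" by (simp only: mult_pos_pos)
    thus ?thesis using z S0_def by simp
  qed
qed



lemma tstar_upper:
  assumes "\<alpha> > 0" "a > 0" "b > 0" "n > 0"
  shows "sstar a b \<alpha> n / n \<le> (a*\<alpha>/b * n powr (-\<alpha>)) powr (1/(\<alpha>+1))"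
proof -
  have b0: "b \<ge> 0" using assms by simp
  note T = tstar_props[OF assms(1,2) b0 assms(4)]
  define t where "t = sstar a b \<alpha> n / n"
  have t: "0 < t" "t < 1" using T t_def by auto
  have e: "a*\<alpha> - a*(\<alpha>+1)*t = b * n powr \<alpha> * t powr (\<alpha>+1)"
    using T(3) unfolding t_def Q_def by simp
  have "a*(\<alpha>+1)*t \<ge> 0" using t assms by simp
  hence "b * (n powr \<alpha> * t powr (\<alpha>+1)) \<le> a*\<alpha>" using e by simp
  hence "n powr \<alpha> * t powr (\<alpha>+1) \<le> a*\<alpha>/b" using assms by (simp add: field_simps)
  hence "t powr (\<alpha>+1) \<le> a*\<alpha>/b / n powr \<alpha>" using assms by (simp add: field_simps)
  hence le: "t powr (\<alpha>+1) \<le> a*\<alpha>/b * n powr (-\<alpha>)" using assms by (simp add: powr_minus divide_inverse)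
  have "(t powr (\<alpha>+1)) powr (1/(\<alpha>+1)) \<le> (a*\<alpha>/b * n powr (-\<alpha>)) powr (1/(\<alpha>+1))"
    using le assms by (intro powr_mono2) auto
  moreover have "(t powr (\<alpha>+1)) powr (1/(\<alpha>+1)) = t"
    using t assms by (simp add: powr_powr)
  ultimately show ?thesis unfolding t_def by simp
qed

lemma tstar_lim:
  assumes "\<alpha> > 0" "a > 0" "b > 0"
  shows "((\<lambda>n. sstar a b \<alpha> n / n) \<longlongrightarrow> 0) at_top"
proof (rule tendsto_sandwich[where f="\<lambda>_. 0" and h="\<lambda>n. (a*\<alpha>/b * n powr (-\<alpha>)) powr (1/(\<alpha>+1))"])
  show "\<forall>\<^sub>F n in at_top. (0::real) \<le> sstar a b \<alpha> n / n"
    using eventually_gt_at_top[of 0]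
    by eventually_elim (use tstar_props[OF assms(1,2)] assms in \<open>auto intro: less_imp_le\<close>)
  show "\<forall>\<^sub>F n in at_top. sstar a b \<alpha> n / n \<le> (a*\<alpha>/b * n powr (-\<alpha>)) powr (1/(\<alpha>+1))"
    using eventually_gt_at_top[of 0]
    by eventually_elim (use tstar_upper[OF assms] in auto)
  show "((\<lambda>_. 0::real) \<longlongrightarrow> 0) at_top" by simp
  have l1: "((\<lambda>n::real. n powr (-\<alpha>)) \<longlongrightarrow> 0) at_top"
    using assms by (intro tendsto_neg_powr filterlim_ident) auto
  have l2: "((\<lambda>n::real. a*\<alpha>/b * n powr (-\<alpha>)) \<longlongrightarrow> 0) at_top"
    using tendsto_mult[OF tendsto_const l1, of "a*\<alpha>/b"] by simp
  show "((\<lambda>n. (a*\<alpha>/b * n powr (-\<alpha>)) powr (1/(\<alpha>+1))) \<longlongrightarrow> 0) at_top"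
    by (rule tendsto_zero_powrI[OF l2 tendsto_const]) (use assms in auto)
qed



definition Phi :: "real \<Rightarrow> real \<Rightarrow> real \<Rightarrow> real \<Rightarrow> real" where
  "Phi a b \<alpha> t = a/b * (\<alpha> * t powr (-\<alpha>-1) - (\<alpha>+1) * t powr (-\<alpha>))"

lemma Qt_Phi:
  assumes "t > 0" "b > 0"
  shows "Q (a*\<alpha>) (a*(\<alpha>+1)) (b * m powr \<alpha>) (\<alpha>+1) t = b * t powr (\<alpha>+1) * (Phi a b \<alpha> t - m powr \<alpha>)"
proof -
  have "t powr (\<alpha>+1) * t powr (-\<alpha>-1) = t powr ((\<alpha>+1) + (-\<alpha>-1))" by (simp only: powr_add)
  hence e1: "t powr (\<alpha>+1) * t powr (-\<alpha>-1) = 1" using assms by simp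
  have "t powr (\<alpha>+1) * t powr (-\<alpha>) = t powr ((\<alpha>+1) + (-\<alpha>))" by (simp only: powr_add)
  hence e2: "t powr (\<alpha>+1) * t powr (-\<alpha>) = t" using assms by simp
  have "b * t powr (\<alpha>+1) * (Phi a b \<alpha> t - m powr \<alpha>)
     = a * (\<alpha> * (t powr (\<alpha>+1) * t powr (-\<alpha>-1)) - (\<alpha>+1) * (t powr (\<alpha>+1) * t powr (-\<alpha>)))
       - b * m powr \<alpha> * t powr (\<alpha>+1)"
    unfolding Phi_def using assms by (simp add: field_simps)
  also have "\<dots> = Q (a*\<alpha>) (a*(\<alpha>+1)) (b * m powr \<alpha>) (\<alpha>+1) t"
    unfolding e1 e2 Q_def by (simp add: algebra_simps)
  finally show ?thesis by simp
qed

lemma Qt_zero_iff: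
  assumes "t > 0" "b > 0"
  shows "Q (a*\<alpha>) (a*(\<alpha>+1)) (b * m powr \<alpha>) (\<alpha>+1) t = 0 \<longleftrightarrow> Phi a b \<alpha> t = m powr \<alpha>"
  using Qt_Phi[OF assms, of a \<alpha> m] assms by simp

lemma Phi_deriv:
  assumes "t > 0"
  shows "(Phi a b \<alpha> has_real_derivative
     a/b * (\<alpha> * ((-\<alpha>-1) * t powr (-\<alpha>-1-1)) - (\<alpha>+1) * ((-\<alpha>) * t powr (-\<alpha>-1)))) (at t)"
proof -
  have d1: "((\<lambda>x. x powr (-\<alpha>-1)) has_real_derivative (-\<alpha>-1) * t powr (-\<alpha>-1-1)) (at t)"
    using has_real_derivative_powr[OF assms, of "-\<alpha>-1"] by simp
  have d2: "((\<lambda>x. x powr (-\<alpha>)) has_real_derivative (-\<alpha>) * t powr (-\<alpha>-1)) (at t)"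
    using has_real_derivative_powr[OF assms, of "-\<alpha>"] by simp
  show ?thesis unfolding Phi_def[abs_def]
    by (rule DERIV_cmult[OF DERIV_diff[OF DERIV_cmult[OF d1] DERIV_cmult[OF d2]]])
qed

lemma tstar_deriv_pos:
  assumes "\<alpha> > 0" "a > 0" "b > 0" "n > 0"
  shows "\<exists>D. ((\<lambda>m. sstar a b \<alpha> m / m) has_real_derivative D) (at n) \<and>
               D \<le> 0 \<and> D \<ge> - (\<alpha> / (\<alpha> + 1)) * (b / a) * n powr (\<alpha> - 1)"
proof -
  have b0: "b \<ge> 0" using assms by simp
  define \<tau> where "\<tau> = (\<lambda>m. sstar a b \<alpha> m / m)"
  define G where "G = (\<lambda>u. \<tau> (u powr (1/\<alpha>)))"
  define \<Phi> where "\<Phi> = Phi a b \<alpha>"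
  define t0 where "t0 = \<tau> n"
  note T0 = tstar_props[OF assms(1,2) b0 assms(4)]
  have t0: "0 < t0" "t0 < 1" using T0 unfolding t0_def \<tau>_def by auto
  have Qt0: "Q (a*\<alpha>) (a*(\<alpha>+1)) (b * n powr \<alpha>) (\<alpha>+1) t0 = 0" using T0 unfolding t0_def \<tau>_def by simp
  have Phit0: "\<Phi> t0 = n powr \<alpha>" using Qt_zero_iff[OF t0(1) assms(3)] Qt0 unfolding \<Phi>_def by simp
  have t0u: "t0 < \<alpha>/(\<alpha>+1)"
  proof -
    have "b * n powr \<alpha> * t0 powr (\<alpha>+1) > 0" using assms t0 by simp
    hence "a*\<alpha> - a*(\<alpha>+1)*t0 > 0" using Qt0 unfolding Q_def by simp
    hence "a * (\<alpha> - (\<alpha>+1)*t0) > 0" by (simp add: algebra_simps)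
    hence "\<alpha> - (\<alpha>+1)*t0 > 0" using assms by (simp add: zero_less_mult_iff)
    thus ?thesis using assms by (simp add: field_simps)
  qed
  have PhiG: "\<Phi> (G y) = y" if y: "0 < y" for y
  proof -
    define m where "m = y powr (1/\<alpha>)"
    have m: "m > 0" using y m_def by simp
    have mp: "m powr \<alpha> = y" using y assms unfolding m_def by (simp add: powr_powr)
    note Tm = tstar_props[OF assms(1,2) b0 m]
    have "G y = \<tau> m" unfolding G_def m_def by simp
    moreover have "Phi a b \<alpha> (\<tau> m) = m powr \<alpha>"
      using Qt_zero_iff[of "\<tau> m" b a \<alpha> m] Tm assms unfolding \<tau>_def by simp
    ultimately show ?thesis using mp unfolding \<Phi>_def by simp
  qed
  have GPhi: "G (\<Phi> z) = z" if z: "0 < z" "z < \<alpha>/(\<alpha>+1)" for z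
  proof -
    have "z powr (-\<alpha>-1) * z = z powr (-\<alpha>)"
    proof -
      have "z powr (-\<alpha>-1) * z powr 1 = z powr ((-\<alpha>-1)+1)" by (simp only: powr_add)
      thus ?thesis using z by simp
    qed
    hence "\<Phi> z = a/b * (z powr (-\<alpha>-1) * (\<alpha> - (\<alpha>+1) * z))"
      unfolding \<Phi>_def Phi_def by (simp add: algebra_simps)
    moreover have "\<alpha> - (\<alpha>+1) * z > 0" using z assms by (simp add: field_simps)
    ultimately have pz: "\<Phi> z > 0" using assms z by simp
    define m where "m = \<Phi> z powr (1/\<alpha>)"
    have m: "m > 0" using pz m_def by simp
    have mp: "m powr \<alpha> = \<Phi> z" using pz assms unfolding m_def by (simp add: powr_powr)
    have "Q (a*\<alpha>) (a*(\<alpha>+1)) (b * m powr \<alpha>) (\<alpha>+1) z = 0"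
      using Qt_zero_iff[of z b a \<alpha> m] z assms mp unfolding \<Phi>_def by simp
    hence "\<tau> m = z" using tstar_unique[OF assms(1,2) b0 m z(1)] unfolding \<tau>_def by simp
    thus ?thesis unfolding G_def m_def by simp
  qed
  define Dp where "Dp = a/b * (\<alpha> * ((-\<alpha>-1) * t0 powr (-\<alpha>-1-1)) - (\<alpha>+1) * ((-\<alpha>) * t0 powr (-\<alpha>-1)))"
  have dPhi: "DERIV \<Phi> t0 :> Dp" unfolding \<Phi>_def Dp_def by (rule Phi_deriv[OF t0(1)])
  define P where "P = t0 powr (-\<alpha>-1)"
  have P: "P \<ge> 1"
  proof -
    have "t0 powr (-\<alpha>-1) \<ge> 1 powr (-\<alpha>-1)" using t0 assms by (intro powr_mono2') auto
    thus ?thesis unfolding P_def by simp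
  qed
  have "t0 powr (-\<alpha>-1-1) = t0 powr (-\<alpha>-1) / t0 powr 1" by (simp only: powr_diff)
  hence h: "t0 powr (-\<alpha>-1-1) = P / t0" unfolding P_def using t0 by simp
  have Dp_eq: "Dp = - (a/b * \<alpha> * (\<alpha>+1) * P * (1 - t0) / t0)"
    unfolding Dp_def h P_def[symmetric] using t0 assms by (simp add: field_simps)
  define K where "K = a/b * \<alpha> * (\<alpha>+1) * P * (1 - t0) / t0"
  have K: "K > 0" unfolding K_def using assms t0 P by simp
  have DpK: "Dp = - K" using Dp_eq K_def by simp
  have contG: "isCont G (n powr \<alpha>)"
  proof -
    define d where "d = min (t0/2) ((\<alpha>/(\<alpha>+1) - t0)/2)"
    have d: "d > 0" using t0 t0u d_def by simp
    have "isCont G (\<Phi> t0)"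
    proof (rule isCont_inverse_function[where f=\<Phi> and g=G, OF d])
      fix z assume "\<bar>z - t0\<bar> \<le> d"
      hence z: "0 < z" "z < \<alpha>/(\<alpha>+1)" using d_def t0 t0u by (auto simp: abs_le_iff min_def split: if_splits)
      show "G (\<Phi> z) = z" by (rule GPhi[OF z])
      show "isCont \<Phi> z" using Phi_deriv[OF z(1), of a b \<alpha>] DERIV_isCont unfolding \<Phi>_def by blast
    qed
    thus ?thesis using Phit0 by simp
  qed
  have np: "n powr \<alpha> > 0" using assms by simp
  have dG: "DERIV G (n powr \<alpha>) :> inverse Dp"
  proof (rule DERIV_inverse_function[where f=\<Phi> and a=0 and b="n powr \<alpha> + 1"])
    have "G (n powr \<alpha>) = t0" unfolding G_def t0_def using assms by (simp add: powr_powr)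
    thus "DERIV \<Phi> (G (n powr \<alpha>)) :> Dp" using dPhi by simp
    show "Dp \<noteq> 0" using DpK K by simp
    show "0 < n powr \<alpha>" "n powr \<alpha> < n powr \<alpha> + 1" using np by auto
    show "\<And>y. 0 < y \<Longrightarrow> y < n powr \<alpha> + 1 \<Longrightarrow> \<Phi> (G y) = y" using PhiG by blast
    show "isCont G (n powr \<alpha>)" by (rule contG)
  qed
  have dpow: "((\<lambda>m. m powr \<alpha>) has_real_derivative \<alpha> * n powr (\<alpha> - 1)) (at n)"
    by (rule has_real_derivative_powr[OF assms(4)])
  have dc: "((\<lambda>m. G (m powr \<alpha>)) has_real_derivative inverse Dp * (\<alpha> * n powr (\<alpha> - 1))) (at n)"
    by (rule DERIV_chain2[OF dG dpow])
  have dtau: "(\<tau> has_real_derivative inverse Dp * (\<alpha> * n powr (\<alpha> - 1))) (at n)"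
  proof (rule has_field_derivative_transform_within_open[OF dc, where S="{0<..}"])
    show "open {0::real<..}" by simp
    show "n \<in> {0<..}" using assms by simp
    fix x :: real assume "x \<in> {0<..}"
    thus "G (x powr \<alpha>) = \<tau> x" unfolding G_def using assms by (simp add: powr_powr)
  qed
  define N where "N = n powr (\<alpha> - 1)"
  have N: "N > 0" unfolding N_def using assms by simp
  have Deq: "inverse Dp * (\<alpha> * n powr (\<alpha> - 1)) = - (\<alpha> * N / K)"
    unfolding DpK N_def by (simp add: field_simps)
  have le0: "- (\<alpha> * N / K) \<le> 0" using N K assms by simp
  have key: "t0 \<le> \<alpha> * P * (1 - t0)"
  proof -
    have "t0 < \<alpha> * (1 - t0)" using t0u assms by (simp add: field_simps)
    also have "\<alpha> * (1 - t0) \<le> \<alpha> * P * (1 - t0)" using P assms t0 by simp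
    finally show ?thesis by simp
  qed
  have "\<alpha> \<le> (\<alpha> / (\<alpha> + 1)) * (b / a) * K"
  proof -
    have e: "(\<alpha> / (\<alpha> + 1)) * (b / a) * (a / b) = \<alpha> / (\<alpha> + 1)" using assms by simp
    have "(\<alpha> / (\<alpha> + 1)) * (b / a) * K = ((\<alpha> / (\<alpha> + 1)) * (b / a) * (a / b)) * (\<alpha> * (\<alpha>+1) * P * (1 - t0) / t0)"
      unfolding K_def by (simp add: mult_ac)
    also have "\<dots> = (\<alpha> / (\<alpha> + 1)) * (\<alpha> * (\<alpha>+1) * P * (1 - t0) / t0)"
      by (simp only: e)
    also have "\<dots> = (\<alpha> / (\<alpha> + 1)) * (\<alpha>+1) * (\<alpha> * (P * (1 - t0) / t0))"
      by (simp add: mult_ac)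
    also have "(\<alpha> / (\<alpha> + 1)) * (\<alpha>+1) = \<alpha>"
      using assms by (simp add: add_pos_pos)
    also have "\<alpha> * (\<alpha> * (P * (1 - t0) / t0)) = \<alpha> * (\<alpha> * P * (1 - t0)) / t0"
      by (simp add: mult_ac)
    also have "\<dots> \<ge> \<alpha> * t0 / t0" using key assms t0 by (intro divide_right_mono mult_left_mono) auto
    finally show ?thesis using t0 by simp
  qed
  hence "\<alpha> * N \<le> (\<alpha> / (\<alpha> + 1)) * (b / a) * K * N" by (rule mult_right_mono) (use N in simp)
  hence "\<alpha> * N / K \<le> (\<alpha> / (\<alpha> + 1)) * (b / a) * N" using K by (simp add: field_simps)
  hence ge: "- (\<alpha> * N / K) \<ge> - (\<alpha> / (\<alpha> + 1)) * (b / a) * n powr (\<alpha> - 1)" unfolding N_def by simp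
  show ?thesis using dtau Deq le0 ge unfolding \<tau>_def by (intro exI[of _ "- (\<alpha> * N / K)"]) simp
qed

lemma tstar_deriv_zero:
  assumes "\<alpha> > 0" "a > 0" "n > 0"
  shows "((\<lambda>m. sstar a 0 \<alpha> m / m) has_real_derivative 0) (at n)"
proof (rule has_field_derivative_transform_within_open[OF DERIV_const, where S="{0<..}"])
  show "open {0::real<..}" by simp
  show "n \<in> {0<..}" using assms by simp
  fix x :: real assume "x \<in> {0<..}"
  thus "\<alpha> / (\<alpha>+1) = sstar a 0 \<alpha> x / x" using b0_val[OF assms(1,2), of x] by simp
qed


theorem proposition1:
  fixes \<alpha> :: real
  assumes "\<alpha> > 0"
  shows
   "(\<forall>a b n. a > 0 \<and> b \<ge> 0 \<and> n > 0 \<longrightarrow>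
        (\<exists>!s. 0 < s \<and> s < n \<and> foc a b \<alpha> n s = 0) \<and>
        0 < sstar a b \<alpha> n \<and> sstar a b \<alpha> n < n \<and> foc a b \<alpha> n (sstar a b \<alpha> n) = 0 \<and>
        (\<forall>s. 0 < s \<and> s < n \<and> s \<noteq> sstar a b \<alpha> n \<longrightarrow>
              obj a b \<alpha> n (sstar a b \<alpha> n) < obj a b \<alpha> n s))
  \<and> (\<forall>b n. b \<ge> 0 \<and> n > 0 \<longrightarrow> mono_on {0<..} (\<lambda>a. sstar a b \<alpha> n))
  \<and> (\<forall>b n. b > 0 \<and> n > 0 \<longrightarrow> strict_mono_on {0<..} (\<lambda>a. sstar a b \<alpha> n))
  \<and> (\<forall>a n b1 b2. a > 0 \<and> n > 0 \<and> 0 \<le> b1 \<and> b1 < b2 \<longrightarrow> sstar a b2 \<alpha> n < sstar a b1 \<alpha> n)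
  \<and> (\<forall>a b. a > 0 \<and> b \<ge> 0 \<longrightarrow> strict_mono_on {0<..} (\<lambda>n. sstar a b \<alpha> n))
  \<and> (\<forall>a n. a > 0 \<and> n > 0 \<longrightarrow> sstar a 0 \<alpha> n / n = \<alpha> / (\<alpha> + 1))
  \<and> (\<forall>b n. b \<ge> 0 \<and> n > 0 \<longrightarrow> mono_on {0<..} (\<lambda>a. sstar a b \<alpha> n / n))
  \<and> (\<forall>b n. b > 0 \<and> n > 0 \<longrightarrow> strict_mono_on {0<..} (\<lambda>a. sstar a b \<alpha> n / n))
  \<and> (\<forall>a n b1 b2. a > 0 \<and> n > 0 \<and> 0 \<le> b1 \<and> b1 < b2 \<longrightarrow>
          sstar a b2 \<alpha> n / n < sstar a b1 \<alpha> n / n)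
  \<and> (\<forall>a b n1 n2. a > 0 \<and> b \<ge> 0 \<and> 0 < n1 \<and> n1 \<le> n2 \<longrightarrow>
          sstar a b \<alpha> n2 / n2 \<le> sstar a b \<alpha> n1 / n1)
  \<and> (\<forall>a b. a > 0 \<and> b > 0 \<longrightarrow> ((\<lambda>n. sstar a b \<alpha> n / n) \<longlongrightarrow> 0) at_top)
  \<and> (\<forall>a b n. a > 0 \<and> b \<ge> 0 \<and> n > 0 \<and> \<alpha> < 1 \<longrightarrow>
          (\<exists>D. ((\<lambda>m. sstar a b \<alpha> m / m) has_real_derivative D) (at n) \<and>
               D \<le> 0 \<and> D \<ge> - (\<alpha> / (\<alpha> + 1)) * (b / a) * n powr (\<alpha> - 1)))"
proof -
  note A = assms
  show ?thesis
  proof (intro conjI allI impI)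
    fix a b n :: real assume h: "a > 0 \<and> b \<ge> 0 \<and> n > 0"
    note S = sstar_props[OF A, of a b n]
    show "\<exists>!s. 0 < s \<and> s < n \<and> foc a b \<alpha> n s = 0" using S h by blast
    show "0 < sstar a b \<alpha> n" using S h by blast
    show "sstar a b \<alpha> n < n" using S h by blast
    show "foc a b \<alpha> n (sstar a b \<alpha> n) = 0" using S h by blast
    show "obj a b \<alpha> n (sstar a b \<alpha> n) < obj a b \<alpha> n s"
      if "0 < s \<and> s < n \<and> s \<noteq> sstar a b \<alpha> n" for s
      using obj_min[OF A, of a b n s] h that by blast
  next
    fix b n :: real assume h: "b \<ge> 0 \<and> n > 0"
    show "mono_on {0<..} (\<lambda>a. sstar a b \<alpha> n)"
      by (rule mono_onI) (use mono_a(1)[OF A] h in auto)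
  next
    fix b n :: real assume h: "b > 0 \<and> n > 0"
    show "strict_mono_on {0<..} (\<lambda>a. sstar a b \<alpha> n)"
      by (rule strict_mono_onI) (use mono_a(2)[OF A] h in auto)
  next
    fix a n b1 b2 :: real assume h: "a > 0 \<and> n > 0 \<and> 0 \<le> b1 \<and> b1 < b2"
    show "sstar a b2 \<alpha> n < sstar a b1 \<alpha> n" using mono_b[OF A] h by blast
  next
    fix a b :: real assume h: "a > 0 \<and> b \<ge> 0"
    show "strict_mono_on {0<..} (\<lambda>n. sstar a b \<alpha> n)"
      by (rule strict_mono_onI) (use mono_n[OF A] h in auto)
  next
    fix a n :: real assume h: "a > 0 \<and> n > 0"
    show "sstar a 0 \<alpha> n / n = \<alpha> / (\<alpha> + 1)" using b0_val[OF A] h by blast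
  next
    fix b n :: real assume h: "b \<ge> 0 \<and> n > 0"
    show "mono_on {0<..} (\<lambda>a. sstar a b \<alpha> n / n)"
      by (rule mono_onI) (use mono_a(1)[OF A] h in \<open>auto intro: divide_right_mono\<close>)
  next
    fix b n :: real assume h: "b > 0 \<and> n > 0"
    show "strict_mono_on {0<..} (\<lambda>a. sstar a b \<alpha> n / n)"
      by (rule strict_mono_onI) (use mono_a(2)[OF A] h in \<open>auto intro: divide_strict_right_mono\<close>)
  next
    fix a n b1 b2 :: real assume h: "a > 0 \<and> n > 0 \<and> 0 \<le> b1 \<and> b1 < b2"
    show "sstar a b2 \<alpha> n / n < sstar a b1 \<alpha> n / n"
      using mono_b[OF A, of a b1 b2 n] h by (auto intro: divide_strict_right_mono)
  next
    fix a b n1 n2 :: real assume h: "a > 0 \<and> b \<ge> 0 \<and> 0 < n1 \<and> n1 \<le> n2"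
    show "sstar a b \<alpha> n2 / n2 \<le> sstar a b \<alpha> n1 / n1" using mono_tn[OF A] h by blast
  next
    fix a b :: real assume h: "a > 0 \<and> b > 0"
    show "((\<lambda>n. sstar a b \<alpha> n / n) \<longlongrightarrow> 0) at_top" using tstar_lim[OF A] h by blast
  next
    fix a b n :: real assume h: "a > 0 \<and> b \<ge> 0 \<and> n > 0 \<and> \<alpha> < 1"
    show "\<exists>D. ((\<lambda>m. sstar a b \<alpha> m / m) has_real_derivative D) (at n) \<and>
               D \<le> 0 \<and> D \<ge> - (\<alpha> / (\<alpha> + 1)) * (b / a) * n powr (\<alpha> - 1)"
    proof (cases "b = 0")
      case True
      thus ?thesis using tstar_deriv_zero[OF A, of a n] h by (intro exI[of _ 0]) simp
    next
      case False
      thus ?thesis using tstar_deriv_pos[OF A, of a b n] h by simp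
    qed
  qed
qed

end
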